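(* If $\mathcal{P}$ and $\mathcal{Q}$ are ranked finite posets each having a minimum and a maximum element, then $\mathcal{J}(\mathcal{P}\times\mathcal{Q},t)=\mathcal{J}(\mathcal{P},t)\,\mathcal{J}(\mathcal{Q},t)$.
   Context: $\mathcal{P}\times\mathcal{Q}$ carries the product order $(x_1,x_2)\le(y_1,y_2)$ iff $x_1\le y_1$ and $x_2\le y_2$, with rank $\mathrm{rk}(x_1,x_2)=\mathrm{rk}(x_1)+\mathrm{rk}(x_2)$. For a ranked finite poset $\mathcal{R}$ with minimum $\hat 0$ and maximum $\hat 1$, $\mathrm{rk}(\mathcal{R})=\mathrm{rk}(\hat 1)$; let $\delta_3(x,y,z)=1$ if $x=y=z$ and $0$ otherwise, let $J=J_\mathcal{R}$ be the unique integer-valued function on triples $x\le y\le z$ with $\sum_{x\le a\le y\le b\le z}J(a,y,b)=\delta_3(x,y,z)$ for all $x\le y\le z$, and $\mathcal{J}(\mathcal{R},t)=(-1)^{\mathrm{rk}(\mathcal{R})}\sum_{x\in\mathcal{R}}J(\hat 0,x,\hat 1)\,t^{\mathrm{rk}(\mathcal{R})-\mathrm{rk}(x)}$. *)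

theory Defs
  imports "HOL-Computational_Algebra.Polynomial"
begin

definition is_poset :: "'a set \<Rightarrow> ('a \<Rightarrow> 'a \<Rightarrow> bool) \<Rightarrow> bool" where
  "is_poset P le \<longleftrightarrow>
     (\<forall>x\<in>P. le x x) \<and>
     (\<forall>x\<in>P. \<forall>y\<in>P. le x y \<and> le y x \<longrightarrow> x = y) \<and>
     (\<forall>x\<in>P. \<forall>y\<in>P. \<forall>z\<in>P. le x y \<and> le y z \<longrightarrow> le x z)"

definition covers :: "'a set \<Rightarrow> ('a \<Rightarrow> 'a \<Rightarrow> bool) \<Rightarrow> 'a \<Rightarrow> 'a \<Rightarrow> bool" where
  "covers P le x y \<longleftrightarrow> x \<in> P \<and> y \<in> P \<and> le x y \<and> x \<noteq> y \<and>
     \<not> (\<exists>z\<in>P. le x z \<and> le z y \<and> z \<noteq> x \<and> z \<noteq> y)"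

definition pbot :: "'a set \<Rightarrow> ('a \<Rightarrow> 'a \<Rightarrow> bool) \<Rightarrow> 'a" where
  "pbot P le = (THE b. b \<in> P \<and> (\<forall>x\<in>P. le b x))"

definition ptop :: "'a set \<Rightarrow> ('a \<Rightarrow> 'a \<Rightarrow> bool) \<Rightarrow> 'a" where
  "ptop P le = (THE t. t \<in> P \<and> (\<forall>x\<in>P. le x t))"

definition ranked_bounded_poset ::
  "'a set \<Rightarrow> ('a \<Rightarrow> 'a \<Rightarrow> bool) \<Rightarrow> ('a \<Rightarrow> nat) \<Rightarrow> bool" where
  "ranked_bounded_poset P le rk \<longleftrightarrow>
     finite P \<and> is_poset P le \<and>
     (\<exists>b\<in>P. \<forall>x\<in>P. le b x) \<and> (\<exists>t\<in>P. \<forall>x\<in>P. le x t) \<and>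
     rk (pbot P le) = 0 \<and>
     (\<forall>x y. covers P le x y \<longrightarrow> rk y = rk x + 1)"

definition delta3 :: "'a \<Rightarrow> 'a \<Rightarrow> 'a \<Rightarrow> int" where
  "delta3 x y z = (if x = y \<and> y = z then 1 else 0)"

definition Jfun :: "'a set \<Rightarrow> ('a \<Rightarrow> 'a \<Rightarrow> bool) \<Rightarrow> 'a \<Rightarrow> 'a \<Rightarrow> 'a \<Rightarrow> int" where
  "Jfun P le = (THE J.
     (\<forall>x\<in>P. \<forall>y\<in>P. \<forall>z\<in>P. le x y \<and> le y z \<longrightarrow>
        (\<Sum>(a, b) \<in> {(a, b). a \<in> P \<and> b \<in> P \<and> le x a \<and> le a y \<and> le y b \<and> le b z}.
           J a y b) = delta3 x y z) \<and>
     (\<forall>x y z. \<not> (x \<in> P \<and> y \<in> P \<and> z \<in> P \<and> le x y \<and> le y z) \<longrightarrow> J x y z = 0))"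

definition Jpoly :: "'a set \<Rightarrow> ('a \<Rightarrow> 'a \<Rightarrow> bool) \<Rightarrow> ('a \<Rightarrow> nat) \<Rightarrow> int poly" where
  "Jpoly P le rk =
     (let b = pbot P le; t = ptop P le in
      (-1) ^ rk t * (\<Sum>x\<in>P. monom (Jfun P le b x t) (rk t - rk x)))"

definition prod_le :: "('a \<Rightarrow> 'a \<Rightarrow> bool) \<Rightarrow> ('b \<Rightarrow> 'b \<Rightarrow> bool) \<Rightarrow> 'a \<times> 'b \<Rightarrow> 'a \<times> 'b \<Rightarrow> bool" where
  "prod_le le1 le2 p q \<longleftrightarrow> le1 (fst p) (fst q) \<and> le2 (snd p) (snd q)"

definition prod_rk :: "('a \<Rightarrow> nat) \<Rightarrow> ('b \<Rightarrow> nat) \<Rightarrow> 'a \<times> 'b \<Rightarrow> nat" where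
  "prod_rk rk1 rk2 p = rk1 (fst p) + rk2 (snd p)"

end

theory Submission
  imports Defs
begin

definition ivl :: "'a set \<Rightarrow> ('a \<Rightarrow> 'a \<Rightarrow> bool) \<Rightarrow> 'a \<Rightarrow> 'a \<Rightarrow> 'a set" where
  "ivl P le x y = {d\<in>P. le x d \<and> le d y}"

lemma ivl_psub_left:
  assumes "is_poset P le" "x \<in> P" "a \<in> P" "y \<in> P" "le x a" "le a y" "a \<noteq> x"
  shows "ivl P le a y \<subset> ivl P le x y"
proof -
  have "ivl P le a y \<subseteq> ivl P le x y" using assms unfolding ivl_def is_poset_def by blast
  moreover have "x \<in> ivl P le x y" using assms unfolding ivl_def is_poset_def by blast
  moreover have "x \<notin> ivl P le a y" using assms unfolding ivl_def is_poset_def by blast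
  ultimately show ?thesis by blast
qed

lemma ivl_psub_right:
  assumes "is_poset P le" "z \<in> P" "b \<in> P" "y \<in> P" "le y b" "le b z" "b \<noteq> z"
  shows "ivl P le y b \<subset> ivl P le y z"
proof -
  have "ivl P le y b \<subseteq> ivl P le y z" using assms unfolding ivl_def is_poset_def by blast
  moreover have "z \<in> ivl P le y z" using assms unfolding ivl_def is_poset_def by blast
  moreover have "z \<notin> ivl P le y b" using assms unfolding ivl_def is_poset_def by blast
  ultimately show ?thesis by blast
qed

lemma ivl_sub_left:
  assumes "is_poset P le" "x \<in> P" "a \<in> P" "y \<in> P" "le x a" "le a y"
  shows "ivl P le a y \<subseteq> ivl P le x y"
  using assms unfolding ivl_def is_poset_def by blast

lemma ivl_sub_right:
  assumes "is_poset P le" "z \<in> P" "b \<in> P" "y \<in> P" "le y b" "le b z"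
  shows "ivl P le y b \<subseteq> ivl P le y z"
  using assms unfolding ivl_def is_poset_def by blast

function mu :: "'a set \<Rightarrow> ('a \<Rightarrow> 'a \<Rightarrow> bool) \<Rightarrow> 'a \<Rightarrow> 'a \<Rightarrow> int" where
  "mu P le a y = (if finite P \<and> is_poset P le \<and> a \<in> P \<and> y \<in> P \<and> le a y \<and> a \<noteq> y
      then - (\<Sum>c\<in>{c\<in>P. le a c \<and> le c y \<and> c \<noteq> a}. mu P le c y)
      else if a = y then 1 else 0)"
  by pat_completeness auto
termination
proof (relation "measure (\<lambda>(P,le,a,y). card (ivl P le a y))", simp)
  fix P :: "'a set" and le a y c
  assume h: "finite P \<and> is_poset P le \<and> a \<in> P \<and> y \<in> P \<and> le a y \<and> a \<noteq> y"
    and c: "c \<in> {c\<in>P. le a c \<and> le c y \<and> c \<noteq> a}"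
  have "ivl P le c y \<subset> ivl P le a y" using h c by (intro ivl_psub_left) auto
  moreover have "finite (ivl P le a y)" using h unfolding ivl_def by auto
  ultimately show "((P, le, c, y), P, le, a, y) \<in> measure (\<lambda>(P, le, a, y). card (ivl P le a y))"
    by (simp add: psubset_card_mono)
qed

declare mu.simps [simp del]

lemma mu_sum:
  assumes "finite P" "is_poset P le" "x \<in> P" "y \<in> P" "le x y"
  shows "(\<Sum>a\<in>{a\<in>P. le x a \<and> le a y}. mu P le a y) = (if x = y then 1 else 0)"
proof (cases "x = y")
  case True
  have "{a\<in>P. le x a \<and> le a y} = {y}" using assms True unfolding is_poset_def by auto
  moreover have "mu P le y y = 1" by (subst mu.simps) simp
  ultimately show ?thesis using True by simp
next
  case False
  have refl: "le x x" using assms unfolding is_poset_def by blast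
  have e: "{a\<in>P. le x a \<and> le a y} = insert x {c\<in>P. le x c \<and> le c y \<and> c \<noteq> x}"
    using assms(3,5) refl by blast
  have "mu P le x y = - (\<Sum>c\<in>{c\<in>P. le x c \<and> le c y \<and> c \<noteq> x}. mu P le c y)"
    using assms False by (subst mu.simps) simp
  moreover have "finite {c\<in>P. le x c \<and> le c y \<and> c \<noteq> x}" using assms(1) by simp
  ultimately show ?thesis using e False by simp
qed


definition Jspec :: "'a set \<Rightarrow> ('a \<Rightarrow> 'a \<Rightarrow> bool) \<Rightarrow> ('a \<Rightarrow> 'a \<Rightarrow> 'a \<Rightarrow> int) \<Rightarrow> bool" where
  "Jspec P le J \<longleftrightarrow>
     (\<forall>x\<in>P. \<forall>y\<in>P. \<forall>z\<in>P. le x y \<and> le y z \<longrightarrow>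
        (\<Sum>(a, b) \<in> {(a, b). a \<in> P \<and> b \<in> P \<and> le x a \<and> le a y \<and> le y b \<and> le b z}.
           J a y b) = delta3 x y z) \<and>
     (\<forall>x y z. \<not> (x \<in> P \<and> y \<in> P \<and> z \<in> P \<and> le x y \<and> le y z) \<longrightarrow> J x y z = 0)"

lemma Jfun_THE: "Jfun P le = (THE J. Jspec P le J)"
  unfolding Jfun_def Jspec_def by simp

lemma Jspec_unique:
  assumes fin: "finite P" and po: "is_poset P le" and J1: "Jspec P le J1" and J2: "Jspec P le J2"
  shows "J1 = J2"
proof (intro ext)
  fix x y z
  show "J1 x y z = J2 x y z"
  proof (cases "x \<in> P \<and> y \<in> P \<and> z \<in> P \<and> le x y \<and> le y z")
    case False
    then show ?thesis using J1 J2 unfolding Jspec_def by simp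
  next
    case True
    have yP: "y \<in> P" using True by simp
    have main: "\<forall>x z. x \<in> P \<longrightarrow> z \<in> P \<longrightarrow> le x y \<longrightarrow> le y z \<longrightarrow>
        card (ivl P le x y) + card (ivl P le y z) = n \<longrightarrow> J1 x y z = J2 x y z" for n
    proof (induction n rule: less_induct)
      case (less n)
      show ?case
      proof (intro allI impI)
        fix x z assume xP: "x \<in> P" and zP: "z \<in> P" and xy: "le x y" and yz: "le y z"
          and n: "card (ivl P le x y) + card (ivl P le y z) = n"
        define S where "S = {(a, b). a \<in> P \<and> b \<in> P \<and> le x a \<and> le a y \<and> le y b \<and> le b z}"
        have finS: "finite S" unfolding S_def
          by (rule finite_subset[of _ "P \<times> P"]) (use fin in auto)
        have xzS: "(x, z) \<in> S" using xP zP xy yz po unfolding S_def is_poset_def by blast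
        have s1: "(\<Sum>(a, b) \<in> S. J1 a y b) = delta3 x y z"
          using J1 xP yP zP xy yz unfolding Jspec_def S_def by blast
        have s2: "(\<Sum>(a, b) \<in> S. J2 a y b) = delta3 x y z"
          using J2 xP yP zP xy yz unfolding Jspec_def S_def by blast
        have rest: "(\<Sum>(a, b) \<in> S - {(x,z)}. J1 a y b) = (\<Sum>(a, b) \<in> S - {(x,z)}. J2 a y b)"
        proof (rule sum.cong[OF refl])
          fix p assume p: "p \<in> S - {(x, z)}"
          obtain a b where pab: "p = (a, b)" by (cases p)
          have aP: "a \<in> P" and bP: "b \<in> P" and xa: "le x a" and ay: "le a y" and yb: "le y b"
            and bz: "le b z" and ne: "a \<noteq> x \<or> b \<noteq> z"
            using p pab unfolding S_def by auto
          have f1: "finite (ivl P le x y)" "finite (ivl P le y z)" using fin unfolding ivl_def by auto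
          have sub1: "ivl P le a y \<subseteq> ivl P le x y"
            using ivl_sub_left[OF po xP aP yP xa ay] .
          have sub2: "ivl P le y b \<subseteq> ivl P le y z"
            using ivl_sub_right[OF po zP bP yP yb bz] .
          have c1: "card (ivl P le a y) \<le> card (ivl P le x y)" using card_mono[OF f1(1) sub1] .
          have c2: "card (ivl P le y b) \<le> card (ivl P le y z)" using card_mono[OF f1(2) sub2] .
          have "card (ivl P le a y) + card (ivl P le y b) < n"
          proof (cases "a = x")
            case False
            have "card (ivl P le a y) < card (ivl P le x y)"
              using psubset_card_mono[OF f1(1) ivl_psub_left[OF po xP aP yP xa ay False]] .
            then show ?thesis using c2 n by linarith
          next
            case True
            then have "b \<noteq> z" using ne by simp
            then have "card (ivl P le y b) < card (ivl P le y z)"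
              using psubset_card_mono[OF f1(2) ivl_psub_right[OF po zP bP yP yb bz]] by blast
            then show ?thesis using c1 n by linarith
          qed
          then have "J1 a y b = J2 a y b" using less.IH aP bP ay yb by blast
          then show "(case p of (a, b) \<Rightarrow> J1 a y b) = (case p of (a, b) \<Rightarrow> J2 a y b)"
            using pab by simp
        qed
        have "(\<Sum>(a, b) \<in> S. J1 a y b) = J1 x y z + (\<Sum>(a, b) \<in> S - {(x,z)}. J1 a y b)"
          using sum.remove[OF finS xzS, of "\<lambda>(a, b). J1 a y b"] by simp
        moreover have "(\<Sum>(a, b) \<in> S. J2 a y b) = J2 x y z + (\<Sum>(a, b) \<in> S - {(x,z)}. J2 a y b)"
          using sum.remove[OF finS xzS, of "\<lambda>(a, b). J2 a y b"] by simp
        ultimately show "J1 x y z = J2 x y z" using s1 s2 rest by simp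
      qed
    qed
    then show ?thesis using True by blast
  qed
qed

definition Jmu :: "'a set \<Rightarrow> ('a \<Rightarrow> 'a \<Rightarrow> bool) \<Rightarrow> 'a \<Rightarrow> 'a \<Rightarrow> 'a \<Rightarrow> int" where
  "Jmu P le x y z = (if x \<in> P \<and> y \<in> P \<and> z \<in> P \<and> le x y \<and> le y z
     then mu P le x y * mu P (\<lambda>u v. le v u) z y else 0)"

lemma is_poset_flip: "is_poset P le \<Longrightarrow> is_poset P (\<lambda>u v. le v u)"
  unfolding is_poset_def by blast

lemma Jmu_spec:
  assumes fin: "finite P" and po: "is_poset P le"
  shows "Jspec P le (Jmu P le)"
  unfolding Jspec_def
proof (intro conjI ballI impI allI)
  fix x y z assume xP: "x \<in> P" and yP: "y \<in> P" and zP: "z \<in> P" and h: "le x y \<and> le y z"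
  define A where "A = {a\<in>P. le x a \<and> le a y}"
  define B where "B = {b\<in>P. le b z \<and> le y b}"
  have S: "{(a, b). a \<in> P \<and> b \<in> P \<and> le x a \<and> le a y \<and> le y b \<and> le b z} = A \<times> B"
    unfolding A_def B_def by auto
  have "(\<Sum>(a, b) \<in> A \<times> B. Jmu P le a y b) = (\<Sum>(a, b) \<in> A \<times> B. mu P le a y * mu P (\<lambda>u v. le v u) b y)"
    by (rule sum.cong) (auto simp: Jmu_def A_def B_def yP)
  also have "\<dots> = (\<Sum>a\<in>A. mu P le a y) * (\<Sum>b\<in>B. mu P (\<lambda>u v. le v u) b y)"
    by (simp add: sum_product sum.cartesian_product)
  also have "(\<Sum>a\<in>A. mu P le a y) = (if x = y then 1 else 0)"
    unfolding A_def using mu_sum[OF fin po xP yP] h by simp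
  also have "(\<Sum>b\<in>B. mu P (\<lambda>u v. le v u) b y) = (if z = y then 1 else 0)"
    unfolding B_def using mu_sum[OF fin is_poset_flip[OF po] zP yP] h by simp
  finally show "(\<Sum>(a, b) \<in> {(a, b). a \<in> P \<and> b \<in> P \<and> le x a \<and> le a y \<and> le y b \<and> le b z}. Jmu P le a y b) = delta3 x y z"
    unfolding S delta3_def by auto
next
  fix x y z assume "\<not> (x \<in> P \<and> y \<in> P \<and> z \<in> P \<and> le x y \<and> le y z)"
  then show "Jmu P le x y z = 0" unfolding Jmu_def by auto
qed

lemma Jfun_eq_spec:
  assumes fin: "finite P" and po: "is_poset P le" and J: "Jspec P le J"
  shows "Jfun P le = J"
  unfolding Jfun_THE
  by (rule the_equality[where P="Jspec P le", OF J]) (use Jspec_unique[OF fin po _ J] in blast)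

lemma Jfun_spec:
  assumes fin: "finite P" and po: "is_poset P le"
  shows "Jspec P le (Jfun P le)"
  using Jfun_eq_spec[OF fin po Jmu_spec[OF fin po]] Jmu_spec[OF fin po] by simp


lemma prod_poset:
  assumes "is_poset P leP" "is_poset Q leQ"
  shows "is_poset (P \<times> Q) (prod_le leP leQ)"
  unfolding is_poset_def
proof (intro conjI ballI impI)
  fix x assume "x \<in> P \<times> Q" then show "prod_le leP leQ x x"
    using assms unfolding is_poset_def prod_le_def by (auto simp: mem_Times_iff)
next
  fix x y assume "x \<in> P \<times> Q" "y \<in> P \<times> Q" "prod_le leP leQ x y \<and> prod_le leP leQ y x"
  then show "x = y" using assms unfolding is_poset_def prod_le_def
    by (metis mem_Times_iff prod_eq_iff)
next
  fix x y z assume "x \<in> P \<times> Q" "y \<in> P \<times> Q" "z \<in> P \<times> Q"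
    "prod_le leP leQ x y \<and> prod_le leP leQ y z"
  then show "prod_le leP leQ x z" using assms unfolding is_poset_def prod_le_def
    by (metis mem_Times_iff)
qed

lemma delta3_prod: "delta3 (x1, x2) (y1, y2) (z1, z2) = delta3 x1 y1 z1 * delta3 x2 y2 z2"
  unfolding delta3_def by auto

lemma Jprod_spec:
  assumes finP: "finite P" and poP: "is_poset P leP" and finQ: "finite Q" and poQ: "is_poset Q leQ"
  shows "Jspec (P \<times> Q) (prod_le leP leQ)
    (\<lambda>x y z. Jfun P leP (fst x) (fst y) (fst z) * Jfun Q leQ (snd x) (snd y) (snd z))"
  unfolding Jspec_def
proof (intro conjI ballI impI allI)
  fix x y z assume xP: "x \<in> P \<times> Q" and yP: "y \<in> P \<times> Q" and zP: "z \<in> P \<times> Q"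
    and h: "prod_le leP leQ x y \<and> prod_le leP leQ y z"
  obtain x1 x2 where x: "x = (x1, x2)" by (cases x)
  obtain y1 y2 where y: "y = (y1, y2)" by (cases y)
  obtain z1 z2 where z: "z = (z1, z2)" by (cases z)
  define S1 where "S1 = {(a, b). a \<in> P \<and> b \<in> P \<and> leP x1 a \<and> leP a y1 \<and> leP y1 b \<and> leP b z1}"
  define S2 where "S2 = {(a, b). a \<in> Q \<and> b \<in> Q \<and> leQ x2 a \<and> leQ a y2 \<and> leQ y2 b \<and> leQ b z2}"
  define g :: "('a \<times> 'a) \<times> ('b \<times> 'b) \<Rightarrow> ('a \<times> 'b) \<times> ('a \<times> 'b)"
    where "g = (\<lambda>((a1, b1), (a2, b2)). ((a1, a2), (b1, b2)))"
  have S: "{(a, b). a \<in> P \<times> Q \<and> b \<in> P \<times> Q \<and> prod_le leP leQ x a \<and> prod_le leP leQ a y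
      \<and> prod_le leP leQ y b \<and> prod_le leP leQ b z} = g ` (S1 \<times> S2)"
  proof (rule set_eqI)
    fix p :: "('a \<times> 'b) \<times> ('a \<times> 'b)"
    obtain a1 a2 b1 b2 where p: "p = ((a1, a2), (b1, b2))" by (metis prod.exhaust)
    have "p \<in> g ` (S1 \<times> S2) \<longleftrightarrow> ((a1, b1), (a2, b2)) \<in> S1 \<times> S2"
    proof
      assume "p \<in> g ` (S1 \<times> S2)"
      then obtain q where q: "q \<in> S1 \<times> S2" "p = g q" by blast
      obtain c1 d1 c2 d2 where "q = ((c1, d1), (c2, d2))" by (metis prod.exhaust)
      then show "((a1, b1), (a2, b2)) \<in> S1 \<times> S2" using q p unfolding g_def by simp
    next
      assume "((a1, b1), (a2, b2)) \<in> S1 \<times> S2"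
      moreover have "p = g ((a1, b1), (a2, b2))" using p unfolding g_def by simp
      ultimately show "p \<in> g ` (S1 \<times> S2)" by blast
    qed
    then show "p \<in> {(a, b). a \<in> P \<times> Q \<and> b \<in> P \<times> Q \<and> prod_le leP leQ x a \<and> prod_le leP leQ a y
      \<and> prod_le leP leQ y b \<and> prod_le leP leQ b z} \<longleftrightarrow> p \<in> g ` (S1 \<times> S2)"
      unfolding p x y z S1_def S2_def prod_le_def by auto
  qed
  have inj: "inj_on g (S1 \<times> S2)" unfolding g_def inj_on_def by auto
  have "(\<Sum>(a, b) \<in> g ` (S1 \<times> S2). Jfun P leP (fst a) (fst y) (fst b) * Jfun Q leQ (snd a) (snd y) (snd b))
     = (\<Sum>q \<in> S1 \<times> S2. (case q of ((a1, b1), (a2, b2)) \<Rightarrow> Jfun P leP a1 y1 b1 * Jfun Q leQ a2 y2 b2))"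
    by (subst sum.reindex[OF inj]) (auto simp: g_def y intro!: sum.cong)
  also have "\<dots> = (\<Sum>p1 \<in> S1. \<Sum>p2 \<in> S2. (case p1 of (a1, b1) \<Rightarrow> Jfun P leP a1 y1 b1) * (case p2 of (a2, b2) \<Rightarrow> Jfun Q leQ a2 y2 b2))"
    by (subst sum.cartesian_product[symmetric]) (auto intro!: sum.cong)
  also have "\<dots> = (\<Sum>(a1, b1) \<in> S1. Jfun P leP a1 y1 b1) * (\<Sum>(a2, b2) \<in> S2. Jfun Q leQ a2 y2 b2)"
    by (simp add: sum_product)
  also have "(\<Sum>(a1, b1) \<in> S1. Jfun P leP a1 y1 b1) = delta3 x1 y1 z1"
    using Jfun_spec[OF finP poP] xP yP zP h unfolding Jspec_def S1_def x y z prod_le_def by auto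
  also have "(\<Sum>(a2, b2) \<in> S2. Jfun Q leQ a2 y2 b2) = delta3 x2 y2 z2"
    using Jfun_spec[OF finQ poQ] xP yP zP h unfolding Jspec_def S2_def x y z prod_le_def by auto
  finally show "(\<Sum>(a, b) \<in> {(a, b). a \<in> P \<times> Q \<and> b \<in> P \<times> Q \<and> prod_le leP leQ x a \<and> prod_le leP leQ a y
      \<and> prod_le leP leQ y b \<and> prod_le leP leQ b z}. Jfun P leP (fst a) (fst y) (fst b) * Jfun Q leQ (snd a) (snd y) (snd b))
     = delta3 x y z"
    unfolding S unfolding x y z delta3_prod by simp
next
  fix x y z assume h: "\<not> (x \<in> P \<times> Q \<and> y \<in> P \<times> Q \<and> z \<in> P \<times> Q \<and> prod_le leP leQ x y \<and> prod_le leP leQ y z)"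
  have "\<not> (fst x \<in> P \<and> fst y \<in> P \<and> fst z \<in> P \<and> leP (fst x) (fst y) \<and> leP (fst y) (fst z))
     \<or> \<not> (snd x \<in> Q \<and> snd y \<in> Q \<and> snd z \<in> Q \<and> leQ (snd x) (snd y) \<and> leQ (snd y) (snd z))"
    using h unfolding prod_le_def by (auto simp: mem_Times_iff)
  then show "Jfun P leP (fst x) (fst y) (fst z) * Jfun Q leQ (snd x) (snd y) (snd z) = 0"
    using Jfun_spec[OF finP poP] Jfun_spec[OF finQ poQ] unfolding Jspec_def by auto
qed

lemma Jfun_prod:
  assumes finP: "finite P" and poP: "is_poset P leP" and finQ: "finite Q" and poQ: "is_poset Q leQ"
  shows "Jfun (P \<times> Q) (prod_le leP leQ) x y z = Jfun P leP (fst x) (fst y) (fst z) * Jfun Q leQ (snd x) (snd y) (snd z)"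
  using Jfun_eq_spec[OF _ prod_poset[OF poP poQ] Jprod_spec[OF finP poP finQ poQ]] finP finQ by simp


lemma rank_mono:
  assumes rp: "ranked_bounded_poset P le rk"
  shows "x \<in> P \<Longrightarrow> y \<in> P \<Longrightarrow> le x y \<Longrightarrow> rk x \<le> rk y"
proof (induction "card (ivl P le x y)" arbitrary: x rule: less_induct)
  case less
  have fin: "finite P" and po: "is_poset P le" and cov: "\<And>u v. covers P le u v \<Longrightarrow> rk v = rk u + 1"
    using rp unfolding ranked_bounded_poset_def by auto
  show ?case
  proof (cases "x = y")
    case True then show ?thesis by simp
  next
    case False
    define S where "S = {z\<in>P. le x z \<and> le z y \<and> z \<noteq> x}"
    have yS: "y \<in> S" using less.prems False po unfolding S_def is_poset_def by blast
    obtain z where zS: "z \<in> S" and zmin: "\<And>w. w \<in> S \<Longrightarrow> card {d\<in>P. le d z} \<le> card {d\<in>P. le d w}"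
      using ex_has_least_nat[of "\<lambda>z. z \<in> S" y "\<lambda>z. card {d\<in>P. le d z}"] yS by blast
    have zP: "z \<in> P" and xz: "le x z" and zy: "le z y" and zx: "z \<noteq> x" using zS unfolding S_def by auto
    have "covers P le x z"
      unfolding covers_def
    proof (intro conjI)
      show "\<not> (\<exists>w\<in>P. le x w \<and> le w z \<and> w \<noteq> x \<and> w \<noteq> z)"
      proof
        assume "\<exists>w\<in>P. le x w \<and> le w z \<and> w \<noteq> x \<and> w \<noteq> z"
        then obtain w where wP: "w \<in> P" and xw: "le x w" and wz: "le w z" and wx: "w \<noteq> x" and wz': "w \<noteq> z"
          by blast
        have wy: "le w y" using po wP zP less.prems(2) wz zy unfolding is_poset_def by blast
        have wS: "w \<in> S" using wP xw wy wx unfolding S_def by blast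
        have sub: "{d\<in>P. le d w} \<subset> {d\<in>P. le d z}"
        proof -
          have "{d\<in>P. le d w} \<subseteq> {d\<in>P. le d z}" using po wP zP wz unfolding is_poset_def by blast
          moreover have "z \<in> {d\<in>P. le d z}" using po zP unfolding is_poset_def by blast
          moreover have "z \<notin> {d\<in>P. le d w}" using po zP wP wz wz' unfolding is_poset_def by blast
          ultimately show ?thesis by blast
        qed
        have "card {d\<in>P. le d w} < card {d\<in>P. le d z}"
          by (rule psubset_card_mono[OF _ sub]) (use fin in simp)
        then show False using zmin[OF wS] by simp
      qed
    qed (use less.prems zP xz zx in auto)
    then have rz: "rk z = rk x + 1" by (rule cov)
    have "ivl P le z y \<subset> ivl P le x y"
      using ivl_psub_left[OF po less.prems(1) zP less.prems(2) xz zy zx] .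
    then have "card (ivl P le z y) < card (ivl P le x y)"
      by (rule psubset_card_mono[rotated]) (use fin in \<open>simp add: ivl_def\<close>)
    then have "rk z \<le> rk y" using less.hyps zP less.prems(2) zy by blast
    then show ?thesis using rz by simp
  qed
qed

lemma pbot_eq: "is_poset P le \<Longrightarrow> b \<in> P \<Longrightarrow> \<forall>x\<in>P. le b x \<Longrightarrow> pbot P le = b"
  unfolding pbot_def is_poset_def by (rule the_equality) blast+

lemma ptop_eq: "is_poset P le \<Longrightarrow> t \<in> P \<Longrightarrow> \<forall>x\<in>P. le x t \<Longrightarrow> ptop P le = t"
  unfolding ptop_def is_poset_def by (rule the_equality) blast+

theorem proposition6p5:
  fixes P :: "'a set" and leP :: "'a \<Rightarrow> 'a \<Rightarrow> bool" and rkP :: "'a \<Rightarrow> nat"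
    and Q :: "'b set" and leQ :: "'b \<Rightarrow> 'b \<Rightarrow> bool" and rkQ :: "'b \<Rightarrow> nat"
  assumes "ranked_bounded_poset P leP rkP"
    and "ranked_bounded_poset Q leQ rkQ"
  shows "Jpoly (P \<times> Q) (prod_le leP leQ) (prod_rk rkP rkQ) = Jpoly P leP rkP * Jpoly Q leQ rkQ"
proof -
  have finP: "finite P" and poP: "is_poset P leP" and finQ: "finite Q" and poQ: "is_poset Q leQ"
    using assms unfolding ranked_bounded_poset_def by auto
  obtain bP where bP: "bP \<in> P" "\<forall>x\<in>P. leP bP x" using assms(1) unfolding ranked_bounded_poset_def by blast
  obtain tP where tP: "tP \<in> P" "\<forall>x\<in>P. leP x tP" using assms(1) unfolding ranked_bounded_poset_def by blast
  obtain bQ where bQ: "bQ \<in> Q" "\<forall>x\<in>Q. leQ bQ x" using assms(2) unfolding ranked_bounded_poset_def by blast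
  obtain tQ where tQ: "tQ \<in> Q" "\<forall>x\<in>Q. leQ x tQ" using assms(2) unfolding ranked_bounded_poset_def by blast
  have pbP: "pbot P leP = bP" using pbot_eq[OF poP bP] .
  have ptP: "ptop P leP = tP" using ptop_eq[OF poP tP] .
  have pbQ: "pbot Q leQ = bQ" using pbot_eq[OF poQ bQ] .
  have ptQ: "ptop Q leQ = tQ" using ptop_eq[OF poQ tQ] .
  have pb: "pbot (P \<times> Q) (prod_le leP leQ) = (bP, bQ)"
    using pbot_eq[OF prod_poset[OF poP poQ]] bP bQ by (auto simp: prod_le_def)
  have pt: "ptop (P \<times> Q) (prod_le leP leQ) = (tP, tQ)"
    using ptop_eq[OF prod_poset[OF poP poQ]] tP tQ by (auto simp: prod_le_def)
  have rP: "rkP x \<le> rkP tP" if "x \<in> P" for x using rank_mono[OF assms(1) that tP(1)] tP(2) that by blast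
  have rQ: "rkQ x \<le> rkQ tQ" if "x \<in> Q" for x using rank_mono[OF assms(2) that tQ(1)] tQ(2) that by blast
  have "(\<Sum>x\<in>P \<times> Q. monom (Jfun (P \<times> Q) (prod_le leP leQ) (bP, bQ) x (tP, tQ))
            (prod_rk rkP rkQ (tP, tQ) - prod_rk rkP rkQ x))
      = (\<Sum>x1\<in>P. \<Sum>x2\<in>Q. monom (Jfun P leP bP x1 tP) (rkP tP - rkP x1) * monom (Jfun Q leQ bQ x2 tQ) (rkQ tQ - rkQ x2))"
  proof -
    have pt: "monom (Jfun (P \<times> Q) (prod_le leP leQ) (bP, bQ) x (tP, tQ))
            (prod_rk rkP rkQ (tP, tQ) - prod_rk rkP rkQ x) =
         (case x of (x1, x2) \<Rightarrow> monom (Jfun P leP bP x1 tP) (rkP tP - rkP x1) * monom (Jfun Q leQ bQ x2 tQ) (rkQ tQ - rkQ x2))"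
      if "x \<in> P \<times> Q" for x
    proof -
      obtain x1 x2 where x: "x = (x1, x2)" by (cases x)
      have "x1 \<in> P" "x2 \<in> Q" using that x by auto
      then have "rkP tP + rkQ tQ - (rkP x1 + rkQ x2) = (rkP tP - rkP x1) + (rkQ tQ - rkQ x2)"
        using rP rQ by fastforce
      then show ?thesis
        by (simp add: x Jfun_prod[OF finP poP finQ poQ] prod_rk_def mult_monom)
    qed
    show ?thesis
      by (subst sum.cartesian_product) (rule sum.cong[OF refl pt])
  qed
  also have "\<dots> = (\<Sum>x1\<in>P. monom (Jfun P leP bP x1 tP) (rkP tP - rkP x1)) * (\<Sum>x2\<in>Q. monom (Jfun Q leQ bQ x2 tQ) (rkQ tQ - rkQ x2))"
    by (simp add: sum_product)
  finally have e: "(\<Sum>x\<in>P \<times> Q. monom (Jfun (P \<times> Q) (prod_le leP leQ) (bP, bQ) x (tP, tQ))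
            (prod_rk rkP rkQ (tP, tQ) - prod_rk rkP rkQ x)) = \<dots>" .
  show ?thesis
    unfolding Jpoly_def Let_def pb pt pbP ptP pbQ ptQ e
    by (simp only: prod_rk_def fst_conv snd_conv power_add mult_ac)
qed

end
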